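(* Let $G_{\mathrm{inv}}$ be the $q$-grammar with master variables $S=\{x,y\}$, rule $x_j\mapsto q^jy_jx_{j+1}$, $y_j\mapsto q^jy_jx_{j+1}$ ($j\ge0$), and order AIO, and let $D$ be its $q$-derivative. Let $\phi$ be the evaluation with $\phi(x_j)=x$, $\phi(y_j)=y$ for all $j\ge0$ ($x,y$ commuting indeterminates). Then for all $n\ge1$, \[ \phi\big(D^n(x_0)\big)=A^{\mathrm{inv}}_n(q;x,y):=\sum_{\sigma\in\mathfrak{S}_n}q^{\operatorname{inv}(\sigma)}x^{\operatorname{asc}(\sigma)}y^{\operatorname{des}(\sigma)}. \]
   Context: Let $\mathbb{K}$ be a commutative ring with unity and characteristic zero, $q$ an indeterminate. For a set $S$ of master variables, $\mathbb{S}=\{s_i:s\in S,\ i\in\{0,1,2,\dots\}\}$ is a set of non-commuting variables, $F(\mathbb{S})$ the free group on $\mathbb{S}$ and $\mathbb{E}=\mathbb{K}[q][F(\mathbb{S})]$ its group algebra. A rule $R$ assigns to each $s_i$ an element $R(s_i)\in\mathbb{E}$, extended by $R(s_i^{-1})=-s_i^{-1}R(s_i)s_{i+1}^{-1}$. The up-arrow $\uparrow$ is the linear map replacing each letter $s_i^{\pm1}$ of a word by $s_{i+1}^{\pm1}$. An order rewrites each word by permuting its letters (extended linearly); AIO stably reorders the letters according to the position of their underlying variable in the sequence $x_0,y_0,x_1,y_1,x_2,y_2,\dots$. A $q$-grammar is a triple $(S,R,\rho)$; its $q$-derivative is the $\mathbb{K}[q]$-linear map $D$ with $D(w_1\cdots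 w_n)=\sum_{j=1}^n\rho\big(w_1\cdots w_{j-1}R(w_j)\uparrow(w_{j+1}\cdots w_n)\big)$ for letters $w_j\in\mathbb{S}\cup\mathbb{S}^{-1}$, $D^0=\mathrm{id}$, $D^k=D\circ D^{k-1}$. An evaluation sends each $s_i$ to an element of a commutative ring containing $\mathbb{K}[q]$ and extends to a $\mathbb{K}[q]$-linear ring morphism with $\phi(s_i^{-1})=\phi(s_i)^{-1}$. For $\sigma\in\mathfrak{S}_n$ with $\sigma_0=\sigma_{n+1}=0$, $0\le i\le n$ is a descent if $\sigma_i>\sigma_{i+1}$, an ascent otherwise; $\operatorname{des},\operatorname{asc}$ count them; $\operatorname{inv}(\sigma)=\#\{(i,j):1\le i<j\le n,\ \sigma_i>\sigma_j\}$. *)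

theory Defs
  imports "HOL-Library.Poly_Mapping" "HOL-Computational_Algebra.Polynomial" "HOL-Combinatorics.Permutations"
begin

datatype mvar = VX | VY

(* a letter s_i^{+-1}: (master variable, index i, inverse flag (True = s_i^{-1})) *)
type_synonym letter = "mvar \<times> nat \<times> bool"
type_synonym word = "letter list"

(* free reduction: reduced words represent the elements of the free group F(S) *)
fun cancel_letter :: "letter \<Rightarrow> word \<Rightarrow> word" where
  "cancel_letter a [] = [a]"
| "cancel_letter a (b # w) =
     (if fst a = fst b \<and> fst (snd a) = fst (snd b) \<and> snd (snd a) \<noteq> snd (snd b)
      then w else a # b # w)"

definition reduce :: "word \<Rightarrow> word" where
  "reduce w = foldr cancel_letter w []"

(* E = K[q][F(S)] : finitely supported maps from reduced words to K[q] *)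
type_synonym 'k E = "word \<Rightarrow>\<^sub>0 'k poly"

definition gword :: "word \<Rightarrow> 'k::comm_ring_1 E" where
  "gword w = Poly_Mapping.single (reduce w) 1"

definition smultE :: "'k::comm_ring_1 poly \<Rightarrow> 'k E \<Rightarrow> 'k E" where
  "smultE c f = (\<Sum>w\<in>Poly_Mapping.keys f. Poly_Mapping.single w (c * Poly_Mapping.lookup f w))"

definition linE :: "(word \<Rightarrow> 'k::comm_ring_1 E) \<Rightarrow> 'k E \<Rightarrow> 'k E" where
  "linE g f = (\<Sum>w\<in>Poly_Mapping.keys f. smultE (Poly_Mapping.lookup f w) (g w))"

definition mulE :: "'k::comm_ring_1 E \<Rightarrow> 'k E \<Rightarrow> 'k E" where
  "mulE f h = (\<Sum>u\<in>Poly_Mapping.keys f. \<Sum>v\<in>Poly_Mapping.keys h.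
      Poly_Mapping.single (reduce (u @ v)) (Poly_Mapping.lookup f u * Poly_Mapping.lookup h v))"

fun up_letter :: "letter \<Rightarrow> letter" where
  "up_letter (v, i, b) = (v, Suc i, b)"

definition upE :: "'k::comm_ring_1 E \<Rightarrow> 'k E" where
  "upE = linE (\<lambda>w. gword (map up_letter w))"

fun rule_ext :: "(mvar \<times> nat \<Rightarrow> 'k::comm_ring_1 E) \<Rightarrow> letter \<Rightarrow> 'k E" where
  "rule_ext R (v, i, False) = R (v, i)"
| "rule_ext R (v, i, True) =
     smultE (-1) (mulE (mulE (gword [(v, i, True)]) (R (v, i))) (gword [(v, Suc i, True)]))"

definition qderiv :: "(mvar \<times> nat \<Rightarrow> 'k::comm_ring_1 E) \<Rightarrow> ('k E \<Rightarrow> 'k E) \<Rightarrow> 'k E \<Rightarrow> 'k E" where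
  "qderiv R rho = linE (\<lambda>w. \<Sum>j<length w.
      rho (mulE (mulE (gword (take j w)) (rule_ext R (w ! j))) (upE (gword (drop (Suc j) w)))))"

(* order AIO: stable reordering according to x_0, y_0, x_1, y_1, ... *)
fun aio_key :: "letter \<Rightarrow> nat" where
  "aio_key (v, i, b) = 2 * i + (if v = VX then 0 else 1)"

definition AIO :: "'k::comm_ring_1 E \<Rightarrow> 'k E" where
  "AIO = linE (\<lambda>w. gword (sort_key aio_key w))"

fun R_inv :: "mvar \<times> nat \<Rightarrow> 'k::comm_ring_1 E" where
  "R_inv (v, j) = smultE ([:0, 1:] ^ j) (gword [(VY, j, False), (VX, Suc j, False)])"

definition D_inv :: "'k::comm_ring_1 E \<Rightarrow> 'k E" where
  "D_inv = qderiv R_inv AIO"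

(* target ring K[q][x][y]: inner variable q, middle x, outer y *)
definition varx :: "'k::comm_ring_1 poly poly poly" where
  "varx = [: [: 0, 1 :] :]"

definition vary :: "'k::comm_ring_1 poly poly poly" where
  "vary = [: 0, 1 :]"

definition embq :: "'k::comm_ring_1 poly \<Rightarrow> 'k poly poly poly" where
  "embq c = [: [: c :] :]"

definition ring_inv :: "'a::comm_ring_1 \<Rightarrow> 'a" where
  "ring_inv a = (THE b. a * b = 1)"

fun phi_letter :: "letter \<Rightarrow> 'k::comm_ring_1 poly poly poly" where
  "phi_letter (v, i, b) = (let a = (if v = VX then varx else vary) in if b then ring_inv a else a)"

definition phi :: "'k::comm_ring_1 E \<Rightarrow> 'k poly poly poly" where
  "phi f = (\<Sum>w\<in>Poly_Mapping.keys f. embq (Poly_Mapping.lookup f w) * prod_list (map phi_letter w))"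

(* statistics, with sigma_0 = sigma_{n+1} = 0 *)
definition ext_perm :: "nat \<Rightarrow> (nat \<Rightarrow> nat) \<Rightarrow> nat \<Rightarrow> nat" where
  "ext_perm n \<sigma> i = (if 1 \<le> i \<and> i \<le> n then \<sigma> i else 0)"

definition des :: "nat \<Rightarrow> (nat \<Rightarrow> nat) \<Rightarrow> nat" where
  "des n \<sigma> = card {i \<in> {0..n}. ext_perm n \<sigma> i > ext_perm n \<sigma> (Suc i)}"

definition asc :: "nat \<Rightarrow> (nat \<Rightarrow> nat) \<Rightarrow> nat" where
  "asc n \<sigma> = card {i \<in> {0..n}. \<not> (ext_perm n \<sigma> i > ext_perm n \<sigma> (Suc i))}"

definition inv :: "nat \<Rightarrow> (nat \<Rightarrow> nat) \<Rightarrow> nat" where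
  "inv n \<sigma> = card {(i, j). 1 \<le> i \<and> i < j \<and> j \<le> n \<and> \<sigma> i > \<sigma> j}"

definition A_inv :: "nat \<Rightarrow> 'k::comm_ring_1 poly poly poly" where
  "A_inv n = (\<Sum>\<sigma>\<in>{\<sigma>. \<sigma> permutes {1..n}}.
      embq ([:0, 1:] ^ inv n \<sigma>) * varx ^ asc n \<sigma> * vary ^ des n \<sigma>)"

end

theory Submission
  imports Defs
begin


definition keysum :: "(word \<Rightarrow> 'a::comm_ring_1 poly \<Rightarrow> 'b::ab_group_add) \<Rightarrow> 'a E \<Rightarrow> 'b" where
  "keysum F f = (\<Sum>w\<in>Poly_Mapping.keys f. F w (Poly_Mapping.lookup f w))"

lemma keysum_superset:
  assumes "finite S" "Poly_Mapping.keys f \<subseteq> S" "\<And>w. F w 0 = 0"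
  shows "keysum F f = (\<Sum>w\<in>S. F w (Poly_Mapping.lookup f w))"
  unfolding keysum_def
  by (rule sum.mono_neutral_left) (use assms in \<open>auto simp: in_keys_iff\<close>)

lemma keysum_add:
  assumes "\<And>w a b. F w (a + b) = F w a + F w b"
  shows "keysum F (f + h) = keysum F f + keysum F h"
proof -
  have z: "\<And>w. F w 0 = 0" using assms[of _ 0 0] by simp
  let ?S = "Poly_Mapping.keys f \<union> Poly_Mapping.keys h"
  have "keysum F (f + h) = (\<Sum>w\<in>?S. F w (Poly_Mapping.lookup (f+h) w))"
    by (rule keysum_superset) (use keys_add[of f h] z in auto)
  also have "\<dots> = (\<Sum>w\<in>?S. F w (Poly_Mapping.lookup f w)) + (\<Sum>w\<in>?S. F w (Poly_Mapping.lookup h w))"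
    by (simp add: lookup_add assms sum.distrib)
  also have "\<dots> = keysum F f + keysum F h"
    by (subst (1 2) keysum_superset[where S="?S"]) (use z in auto)
  finally show ?thesis .
qed

lemma keysum_zero: "keysum F 0 = 0"
  by (simp add: keysum_def)

lemma keysum_single:
  assumes "F u 0 = 0"
  shows "keysum F (Poly_Mapping.single u c) = F u c"
  using assms by (simp add: keysum_def)

lemma keysum_sum:
  assumes "\<And>w a b. F w (a + b) = F w a + F w b"
  shows "keysum F (\<Sum>i\<in>A. g i) = (\<Sum>i\<in>A. keysum F (g i))"
  using sum_comp_morphism[of "keysum F" g A, OF keysum_zero keysum_add[OF assms]]
  by (simp add: o_def)

lemma smultE_keysum: "smultE c f = keysum (\<lambda>w a. Poly_Mapping.single w (c * a)) f"
  by (simp add: smultE_def keysum_def)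

lemma linE_keysum: "linE g f = keysum (\<lambda>w a. smultE a (g w)) f"
  by (simp add: linE_def keysum_def)

lemma phi_keysum: "phi f = keysum (\<lambda>w a. embq a * prod_list (map phi_letter w)) f"
  by (simp add: phi_def keysum_def)

lemma lookup_smultE: "Poly_Mapping.lookup (smultE c f) w = c * Poly_Mapping.lookup f w"
proof -
  have "Poly_Mapping.lookup (smultE c f) w =
     (\<Sum>v\<in>Poly_Mapping.keys f. Poly_Mapping.lookup (Poly_Mapping.single v (c * Poly_Mapping.lookup f v)) w)"
    by (simp add: smultE_def lookup_sum)
  also have "\<dots> = (\<Sum>v\<in>Poly_Mapping.keys f. (if v = w then c * Poly_Mapping.lookup f v else 0))"
    by (rule sum.cong) (auto simp: lookup_single when_def)
  also have "\<dots> = c * Poly_Mapping.lookup f w"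
    by (simp add: in_keys_iff)
  finally show ?thesis .
qed

lemma smultE_add_scalar: "smultE (a + b) f = smultE a f + smultE b f"
  by (rule poly_mapping_eqI) (simp add: lookup_smultE lookup_add algebra_simps)

lemma smultE_add: "smultE c (f + h) = smultE c f + smultE c h"
  by (rule poly_mapping_eqI) (simp add: lookup_smultE lookup_add algebra_simps)

lemma smultE_zero_scalar: "smultE 0 f = 0"
  by (rule poly_mapping_eqI) (simp add: lookup_smultE)

lemma smultE_single: "smultE c (Poly_Mapping.single w a) = Poly_Mapping.single w (c * a)"
  by (rule poly_mapping_eqI) (simp add: lookup_smultE lookup_single when_def)

lemma smultE_zero: "smultE c 0 = 0"
  by (simp add: smultE_def)

lemma smultE_sum: "smultE c (\<Sum>i\<in>A. g i) = (\<Sum>i\<in>A. smultE c (g i))"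
  using sum_comp_morphism[of "smultE c" g A, OF smultE_zero smultE_add]
  by (simp add: o_def)

lemma linE_add: "linE g (f + h) = linE g f + linE g h"
  unfolding linE_keysum by (rule keysum_add) (simp add: smultE_add_scalar)

lemma linE_single: "linE g (Poly_Mapping.single u c) = smultE c (g u)"
  unfolding linE_keysum by (rule keysum_single) (simp add: smultE_zero_scalar)

lemma linE_sum: "linE g (\<Sum>i\<in>A. h i) = (\<Sum>i\<in>A. linE g (h i))"
  unfolding linE_keysum by (rule keysum_sum) (simp add: smultE_add_scalar)

lemma embq_add: "embq (a + b) = embq a + embq b"
  by (simp add: embq_def)

lemma embq_zero: "embq 0 = 0"
  by (simp add: embq_def)

lemma phi_sum: "phi (\<Sum>i\<in>A. h i) = (\<Sum>i\<in>A. phi (h i))"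
  unfolding phi_keysum by (rule keysum_sum) (simp add: embq_add algebra_simps)

lemma phi_single: "phi (Poly_Mapping.single u c) = embq c * prod_list (map phi_letter u)"
  unfolding phi_keysum by (rule keysum_single) (simp add: embq_zero)

lemma mulE_single:
  "mulE (Poly_Mapping.single u a) (Poly_Mapping.single v b) = Poly_Mapping.single (reduce (u @ v)) (a * b)"
  by (cases "a = 0"; cases "b = 0") (auto simp: mulE_def)

definition posw :: "word \<Rightarrow> bool" where "posw w = (\<forall>l\<in>set w. snd (snd l) = False)"

lemma reduce_Cons: "reduce (a # w) = cancel_letter a (reduce w)"
  by (simp add: reduce_def)

lemma reduce_posw: "posw w \<Longrightarrow> reduce w = w"
proof (induction w)
  case Nil then show ?case by (simp add: reduce_def)
next
  case (Cons a w)
  then have "reduce w = w" by (simp add: posw_def)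
  then show ?case using Cons.prems
    by (cases w) (auto simp: reduce_Cons posw_def)
qed

lemma gword_posw: "posw w \<Longrightarrow> gword w = Poly_Mapping.single w 1"
  by (simp add: gword_def reduce_posw)



fun Ew :: "nat \<Rightarrow> mvar list \<Rightarrow> word" where
  "Ew k [] = []"
| "Ew k (c # w) = (c, k, False) # Ew (Suc k) w"

lemma posw_Ew: "posw (Ew k w)"
  by (induction w arbitrary: k) (auto simp: posw_def)

lemma Ew_append: "Ew k (a @ b) = Ew k a @ Ew (k + length a) b"
  by (induction a arbitrary: k) auto

lemma length_Ew[simp]: "length (Ew k w) = length w"
  by (induction w arbitrary: k) auto

lemma take_Ew: "take j (Ew k w) = Ew k (take j w)"
  by (induction w arbitrary: k j) (auto simp: take_Cons split: nat.splits)

lemma drop_Ew: "drop j (Ew k w) = Ew (k + j) (drop j w)"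
  by (induction w arbitrary: k j) (auto simp: drop_Cons split: nat.splits)

lemma nth_Ew: "j < length w \<Longrightarrow> Ew k w ! j = (w ! j, k + j, False)"
  by (induction w arbitrary: k j) (auto simp: nth_Cons split: nat.splits)

lemma up_Ew: "map up_letter (Ew k w) = Ew (Suc k) w"
  by (induction w arbitrary: k) auto

lemma aio_Ew_ge: "x \<in> set (map aio_key (Ew k w)) \<Longrightarrow> 2 * k \<le> x"
  by (induction w arbitrary: k) fastforce+

lemma sorted_aio_Ew: "sorted (map aio_key (Ew k w))"
proof (induction w arbitrary: k)
  case Nil then show ?case by simp
next
  case (Cons c w)
  have "\<forall>x\<in>set (map aio_key (Ew (Suc k) w)). aio_key (c, k, False) \<le> x"
    using aio_Ew_ge[of _ "Suc k" w] by fastforce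
  then show ?case using Cons by simp
qed

lemma gword_Ew: "gword (Ew k w) = Poly_Mapping.single (Ew k w) 1"
  by (rule gword_posw[OF posw_Ew])

lemma AIO_single_Ew: "AIO (Poly_Mapping.single (Ew k w) a) = Poly_Mapping.single (Ew k w) a"
  by (simp add: AIO_def linE_single sort_key_id_if_sorted[OF sorted_aio_Ew] gword_Ew smultE_single)

lemma upE_single_Ew: "upE (Poly_Mapping.single (Ew k w) a) = Poly_Mapping.single (Ew (Suc k) w) a"
  by (simp add: upE_def linE_single up_Ew gword_Ew smultE_single)

abbreviation qq :: "'k::comm_ring_1 poly" where "qq \<equiv> [:0, 1:]"

lemma D_inv_single:
  "D_inv (Poly_Mapping.single (Ew 0 w) c) =
    (\<Sum>j<length w. Poly_Mapping.single (Ew 0 (take j w @ [VY, VX] @ drop (Suc j) w)) (c * qq ^ j))"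
proof -
  have tm: "AIO (mulE (mulE (gword (take j (Ew 0 w))) (rule_ext R_inv (Ew 0 w ! j)))
          (upE (gword (drop (Suc j) (Ew 0 w)))))
      = Poly_Mapping.single (Ew 0 (take j w @ [VY, VX] @ drop (Suc j) w)) (qq ^ j)" if j: "j < length w" for j
  proof -
    have r: "rule_ext R_inv (Ew 0 w ! j) = Poly_Mapping.single (Ew j [VY, VX]) (qq ^ j)"
      using j by (simp add: nth_Ew gword_posw posw_def smultE_single)
    have e: "Ew 0 (take j w) @ Ew j [VY, VX] = Ew 0 (take j w @ [VY, VX])"
      using j by (simp add: Ew_append)
    have e2: "Ew 0 (take j w @ [VY, VX]) @ Ew (Suc (Suc j)) (drop (Suc j) w)
         = Ew 0 (take j w @ [VY, VX] @ drop (Suc j) w)"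
      using j by (simp add: Ew_append)
    show ?thesis
      using j by (simp add: take_Ew drop_Ew gword_Ew r mulE_single reduce_posw[OF posw_Ew]
          upE_single_Ew e e2 AIO_single_Ew del: Ew.simps)
  qed
  show ?thesis
    unfolding D_inv_def qderiv_def linE_single smultE_sum
    by (rule sum.cong) (simp_all add: tm smultE_single)
qed



definition Pn :: "nat \<Rightarrow> (nat \<Rightarrow> nat) set" where "Pn n = {\<sigma>. \<sigma> permutes {1..n}}"

definition ins :: "nat \<Rightarrow> nat \<Rightarrow> (nat \<Rightarrow> nat) \<Rightarrow> nat \<Rightarrow> nat" where
  "ins n g \<sigma> j = (if j \<le> g then \<sigma> j else if j = Suc g then Suc n else if j \<le> Suc n then \<sigma> (j - 1) else j)"

definition hh :: "nat \<Rightarrow> nat \<Rightarrow> nat" where "hh g i = (if i \<le> g then i else Suc i)"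

lemma permutes_intro:
  assumes "finite S" "\<And>x. x \<notin> S \<Longrightarrow> f x = x" "\<And>x. x \<in> S \<Longrightarrow> f x \<in> S" "inj_on f S"
  shows "f permutes S"
proof (rule bij_imp_permutes)
  have "f ` S = S" using endo_inj_surj[of S f] assms by blast
  then show "bij_betw f S S" using assms(4) by (simp add: bij_betw_def)
qed (use assms in auto)

lemma perm_facts:
  fixes \<sigma> :: "nat \<Rightarrow> nat"
  assumes "\<sigma> permutes {1..n}"
  shows "\<sigma> 0 = 0" "\<And>j. j > n \<Longrightarrow> \<sigma> j = j" "\<And>j. 1 \<le> j \<Longrightarrow> j \<le> n \<Longrightarrow> 1 \<le> \<sigma> j \<and> \<sigma> j \<le> n"
    "\<And>i j. \<sigma> i = \<sigma> j \<longleftrightarrow> i = j"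
proof -
  show "\<sigma> 0 = 0" by (rule permutes_not_in[OF assms]) auto
  show "\<And>j. j > n \<Longrightarrow> \<sigma> j = j" using permutes_not_in[OF assms] by auto
  show "\<And>j. 1 \<le> j \<Longrightarrow> j \<le> n \<Longrightarrow> 1 \<le> \<sigma> j \<and> \<sigma> j \<le> n"
    using permutes_in_image[OF assms] by auto
  show "\<And>i j. \<sigma> i = \<sigma> j \<longleftrightarrow> i = j"
    using permutes_inj[OF assms] by (auto simp: inj_def)
qed

lemma ins_hh: "\<sigma> 0 = 0 \<Longrightarrow> g \<le> n \<Longrightarrow> i \<le> n \<Longrightarrow> ins n g \<sigma> (hh g i) = \<sigma> i"
  by (auto simp: ins_def hh_def)

lemma ins_permutes:
  assumes s: "\<sigma> permutes {1..n}" and g: "g \<le> n"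
  shows "ins n g \<sigma> permutes {1..Suc n}"
proof (rule permutes_intro)
  note f = perm_facts[OF s]
  show "ins n g \<sigma> x = x" if x: "x \<notin> {1..Suc n}" for x
  proof -
    have "x = 0 \<or> x > Suc n" using x by auto
    then show ?thesis using f g by (auto simp: ins_def)
  qed
  show "\<And>x. x \<in> {1..Suc n} \<Longrightarrow> ins n g \<sigma> x \<in> {1..Suc n}"
  proof -
    fix x assume x: "x \<in> {1..Suc n}"
    consider "x \<le> g" | "x = Suc g" | "x > Suc g" by linarith
    then show "ins n g \<sigma> x \<in> {1..Suc n}"
    proof cases
      case 1 then show ?thesis using x g f(3)[of x] by (auto simp: ins_def)
    next
      case 2 then show ?thesis by (auto simp: ins_def)
    next
      case 3
      have "1 \<le> x - 1" "x - 1 \<le> n" using 3 x by auto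
      then show ?thesis using 3 x f(3)[of "x - 1"] by (auto simp: ins_def)
    qed
  qed
  show "inj_on (ins n g \<sigma>) {1..Suc n}"
  proof (rule inj_onI)
    fix x y assume x: "x \<in> {1..Suc n}" and y: "y \<in> {1..Suc n}" and e: "ins n g \<sigma> x = ins n g \<sigma> y"
    have v: "ins n g \<sigma> z \<le> n" if z: "z \<in> {1..Suc n}" "z \<noteq> Suc g" for z
    proof (cases "z \<le> g")
      case True then show ?thesis using z g f(3)[of z] by (auto simp: ins_def)
    next
      case False
      have "1 \<le> z - 1" "z - 1 \<le> n" using False z by auto
      then show ?thesis using False z f(3)[of "z - 1"] by (auto simp: ins_def)
    qed
    note vx = v[OF x] and vy = v[OF y]
    show "x = y"
    proof (cases "x = Suc g \<or> y = Suc g")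
      case True
      have i: "ins n g \<sigma> (Suc g) = Suc n" by (simp add: ins_def)
      show ?thesis using True vx vy e i by (metis Suc_n_not_le_n)
    next
      case False
      then show ?thesis using e x y f(4) by (auto simp: ins_def split: if_splits)
    qed
  qed
qed simp

definition del :: "nat \<Rightarrow> (nat \<Rightarrow> nat) \<Rightarrow> nat \<Rightarrow> nat" where
  "del n \<tau> j = (let p = inv_into UNIV \<tau> (Suc n) in if j < p then \<tau> j else if j \<le> n then \<tau> (Suc j) else j)"

lemma del_permutes:
  assumes t: "\<tau> permutes {1..Suc n}"
  shows "del n \<tau> permutes {1..n}" "1 \<le> inv_into UNIV \<tau> (Suc n)" "inv_into UNIV \<tau> (Suc n) \<le> Suc n"
    "\<tau> (inv_into UNIV \<tau> (Suc n)) = Suc n"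
proof -
  note f = perm_facts[OF t]
  define p where "p = inv_into UNIV \<tau> (Suc n)"
  have tp: "\<tau> p = Suc n" unfolding p_def using permutes_inverses(1)[OF t] .
  have p1: "1 \<le> p" using tp f(1) by (cases p) auto
  have p2: "p \<le> Suc n" using tp f(2)[of p] by (cases "p > Suc n") auto
  show "\<tau> (inv_into UNIV \<tau> (Suc n)) = Suc n" using tp p_def by simp
  show "1 \<le> inv_into UNIV \<tau> (Suc n)" "inv_into UNIV \<tau> (Suc n) \<le> Suc n" using p1 p2 p_def by auto
  have d: "del n \<tau> j = (if j < p then \<tau> j else if j \<le> n then \<tau> (Suc j) else j)" for j
    by (simp add: del_def p_def Let_def)
  have ne: "\<And>j. j \<noteq> p \<Longrightarrow> \<tau> j \<noteq> Suc n" using tp f(4) by metis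
  show "del n \<tau> permutes {1..n}"
  proof (rule permutes_intro)
    show "del n \<tau> x = x" if x: "x \<notin> {1..n}" for x
    proof -
      have "x = 0 \<or> x > n" using x by auto
      then show ?thesis using p1 p2 f(1) by (auto simp: d)
    qed
    show "\<And>x. x \<in> {1..n} \<Longrightarrow> del n \<tau> x \<in> {1..n}"
    proof -
      fix x assume x: "x \<in> {1..n}"
      show "del n \<tau> x \<in> {1..n}"
      proof (cases "x < p")
        case True then show ?thesis using x f(3)[of x] ne[of x] by (auto simp: d)
      next
        case False then show ?thesis using x f(3)[of "Suc x"] ne[of "Suc x"] by (auto simp: d)
      qed
    qed
    show "inj_on (del n \<tau>) {1..n}"
      by (rule inj_onI) (auto simp: d f(4) split: if_splits)
  qed simp
qed

lemma ins_bij: "bij_betw (\<lambda>(\<sigma>, g). ins n g \<sigma>) (Pn n \<times> {0..n}) (Pn (Suc n))"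
proof (rule bij_betw_byWitness[where f'="\<lambda>\<tau>. (del n \<tau>, inv_into UNIV \<tau> (Suc n) - 1)"])
  show "\<forall>a\<in>Pn n \<times> {0..n}. (del n ((\<lambda>(\<sigma>, g). ins n g \<sigma>) a), inv_into UNIV ((\<lambda>(\<sigma>, g). ins n g \<sigma>) a) (Suc n) - 1) = a"
  proof
    fix a assume "a \<in> Pn n \<times> {0..n}"
    then obtain \<sigma> g where a: "a = (\<sigma>, g)" and s: "\<sigma> \<in> Pn n" and g: "g \<in> {0..n}" by auto
    have s': "\<sigma> permutes {1..n}" using s by (simp add: Pn_def)
    have t: "ins n g \<sigma> permutes {1..Suc n}" using ins_permutes[OF s'] g by simp
    have p: "inv_into UNIV (ins n g \<sigma>) (Suc n) = Suc g"
      using permutes_inv_eq[OF t] by (simp add: ins_def)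
    note f = perm_facts[OF s']
    have "del n (ins n g \<sigma>) = \<sigma>"
      using f(2) by (auto simp: del_def p Let_def ins_def fun_eq_iff)
    then show "(del n ((\<lambda>(\<sigma>, g). ins n g \<sigma>) a), inv_into UNIV ((\<lambda>(\<sigma>, g). ins n g \<sigma>) a) (Suc n) - 1) = a"
      by (simp add: p a)
  qed
  show "\<forall>a'\<in>Pn (Suc n). (case (del n a', inv_into UNIV a' (Suc n) - 1) of (\<sigma>, g) \<Rightarrow> ins n g \<sigma>) = a'"
  proof
    fix \<tau> assume "\<tau> \<in> Pn (Suc n)"
    then have t: "\<tau> permutes {1..Suc n}" by (simp add: Pn_def)
    note d = del_permutes[OF t]
    note f = perm_facts[OF t]
    define p where "p = inv_into UNIV \<tau> (Suc n)"
    have "ins n (p - 1) (del n \<tau>) = \<tau>"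
      using d(2-4) f(2) unfolding p_def[symmetric]
      by (auto simp: del_def p_def[symmetric] Let_def ins_def fun_eq_iff)
    then show "(case (del n \<tau>, inv_into UNIV \<tau> (Suc n) - 1) of (\<sigma>, g) \<Rightarrow> ins n g \<sigma>) = \<tau>"
      by (simp add: p_def)
  qed
  show "(\<lambda>(\<sigma>, g). ins n g \<sigma>) ` (Pn n \<times> {0..n}) \<subseteq> Pn (Suc n)"
    using ins_permutes by (auto simp: Pn_def)
  show "(\<lambda>\<tau>. (del n \<tau>, inv_into UNIV \<tau> (Suc n) - 1)) ` Pn (Suc n) \<subseteq> Pn n \<times> {0..n}"
    using del_permutes by (fastforce simp: Pn_def)
qed



lemma hh_simps:
  "hh g i < hh g j \<longleftrightarrow> i < j" "hh g i = hh g j \<longleftrightarrow> i = j" "hh g i \<noteq> Suc g" "Suc g \<noteq> hh g i"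
  "1 \<le> hh g i \<longleftrightarrow> 1 \<le> i" "Suc 0 \<le> hh g i \<longleftrightarrow> Suc 0 \<le> i"
  by (auto simp: hh_def)

lemma hh_le: "g \<le> n \<Longrightarrow> hh g i \<le> Suc n \<longleftrightarrow> i \<le> n"
  by (auto simp: hh_def)

lemma hh_surj: "x \<noteq> Suc g \<Longrightarrow> x = hh g (if x \<le> g then x else x - 1)"
  by (auto simp: hh_def)

definition Iset :: "nat \<Rightarrow> (nat \<Rightarrow> nat) \<Rightarrow> (nat \<times> nat) set" where
  "Iset n \<sigma> = {(i, j). 1 \<le> i \<and> i < j \<and> j \<le> n \<and> \<sigma> i > \<sigma> j}"

lemma inv_Iset: "inv n \<sigma> = card (Iset n \<sigma>)"
  by (simp add: inv_def Iset_def)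

lemma Iset_finite: "finite (Iset n \<sigma>)"
  by (rule finite_subset[of _ "{0..n} \<times> {0..n}"]) (auto simp: Iset_def)

lemma inv_ins:
  assumes s: "\<sigma> permutes {1..n}" and g: "g \<le> n"
  shows "inv (Suc n) (ins n g \<sigma>) = inv n \<sigma> + (n - g)"
proof -
  note f = perm_facts[OF s]
  define \<tau> where "\<tau> = ins n g \<sigma>"
  have th: "\<tau> (hh g i) = \<sigma> i" if "i \<le> n" for i using ins_hh[of \<sigma> g n i, OF f(1) g that] by (simp add: \<tau>_def)
  have tg: "\<tau> (Suc g) = Suc n" by (simp add: \<tau>_def ins_def)
  have sle: "\<sigma> i \<le> n" if "i \<le> n" for i using f(1) f(3)[of i] that by (cases i) auto
  define m where "m = (\<lambda>(i, j). (hh g i, hh g j))"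
  have eq: "Iset (Suc n) \<tau> = m ` Iset n \<sigma> \<union> {Suc g} \<times> {Suc (Suc g)..Suc n}"
  proof (rule set_eqI, rule iffI)
    fix p assume p: "p \<in> Iset (Suc n) \<tau>"
    obtain x y where xy: "p = (x, y)" "1 \<le> x" "x < y" "y \<le> Suc n" "\<tau> x > \<tau> y"
      using p by (auto simp: Iset_def)
    have ny: "y \<noteq> Suc g"
    proof
      assume "y = Suc g"
      then have "x \<noteq> Suc g" using xy by simp
      then obtain i where "x = hh g i" by (metis hh_surj)
      then show False using xy `y = Suc g` tg th[of i] sle[of i] hh_le[OF g, of i] by auto
    qed
    show "p \<in> m ` Iset n \<sigma> \<union> {Suc g} \<times> {Suc (Suc g)..Suc n}"
    proof (cases "x = Suc g")
      case True then show ?thesis using xy by auto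
    next
      case False
      obtain i where i: "x = hh g i" using False by (metis hh_surj)
      obtain j where j: "y = hh g j" using ny by (metis hh_surj)
      have "(i, j) \<in> Iset n \<sigma>"
        using xy i j th[of i] th[of j]
        by (auto simp: Iset_def hh_simps hh_le[OF g])
      then show ?thesis using i j xy by (auto simp: m_def)
    qed
  next
    fix p assume p: "p \<in> m ` Iset n \<sigma> \<union> {Suc g} \<times> {Suc (Suc g)..Suc n}"
    then consider (a) i j where "p = (hh g i, hh g j)" "(i, j) \<in> Iset n \<sigma>" | (b) y where "p = (Suc g, y)" "y \<in> {Suc (Suc g)..Suc n}"
      by (auto simp: m_def)
    then show "p \<in> Iset (Suc n) \<tau>"
    proof cases
      case a
      then show ?thesis using th
        by (auto simp: Iset_def hh_simps hh_le[OF g])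
    next
      case b
      have "y \<noteq> Suc g" using b by auto
      then obtain j where j: "y = hh g j" by (metis hh_surj)
      have "j \<le> n" using b j hh_le[OF g, of j] by auto
      then show ?thesis using b j th[of j] sle[of j] tg by (auto simp: Iset_def)
    qed
  qed
  have inj: "inj_on m (Iset n \<sigma>)"
    by (rule inj_onI) (auto simp: m_def hh_simps)
  have disj: "m ` Iset n \<sigma> \<inter> {Suc g} \<times> {Suc (Suc g)..Suc n} = {}"
    by (auto simp: m_def hh_simps)
  have "card (Iset (Suc n) \<tau>) = card (m ` Iset n \<sigma>) + card ({Suc g} \<times> {Suc (Suc g)..Suc n})"
    unfolding eq by (rule card_Un_disjoint) (use Iset_finite disj in auto)
  also have "\<dots> = card (Iset n \<sigma>) + (n - g)"
    using card_image[OF inj] by (simp add: card_cartesian_product)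
  finally show ?thesis by (simp add: inv_Iset \<tau>_def)
qed

definition gw :: "nat \<Rightarrow> (nat \<Rightarrow> nat) \<Rightarrow> mvar list" where
  "gw n \<sigma> = map (\<lambda>k. if ext_perm n \<sigma> (Suc k) < ext_perm n \<sigma> k then VY else VX) [0..<Suc n]"

lemma length_gw[simp]: "length (gw n \<sigma>) = Suc n"
  by (simp add: gw_def)

lemma nth_gw: "k \<le> n \<Longrightarrow> gw n \<sigma> ! k = (if ext_perm n \<sigma> (Suc k) < ext_perm n \<sigma> k then VY else VX)"
  by (simp add: gw_def nth_map_upt del: upt_Suc)

lemma gw_ins:
  assumes s: "\<sigma> permutes {1..n}" and g: "g \<le> n"
  shows "gw (Suc n) (ins n g \<sigma>) = take g (gw n \<sigma>) @ [VX, VY] @ drop (Suc g) (gw n \<sigma>)"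
proof -
  note f = perm_facts[OF s]
  define e where "e = ext_perm n \<sigma>"
  define e' where "e' = ext_perm (Suc n) (ins n g \<sigma>)"
  have e1: "e' k = e k" if "k \<le> g" for k using that g f(1) by (auto simp: e_def e'_def ext_perm_def ins_def)
  have e2: "e' (Suc g) = Suc n" using g by (simp add: e'_def ext_perm_def ins_def)
  have e3: "e' k = e (k - 1)" if "k \<ge> Suc (Suc g)" for k using that g by (auto simp: e_def e'_def ext_perm_def ins_def)
  have ele: "e k \<le> n" for k using f(3)[of k] by (auto simp: e_def ext_perm_def)
  show ?thesis
  proof (rule nth_equalityI)
    show "length (gw (Suc n) (ins n g \<sigma>)) = length (take g (gw n \<sigma>) @ [VX, VY] @ drop (Suc g) (gw n \<sigma>))"
      using g by simp
    fix k assume k: "k < length (gw (Suc n) (ins n g \<sigma>))"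
    then have k': "k \<le> Suc n" by simp
    have L: "gw (Suc n) (ins n g \<sigma>) ! k = (if e' (Suc k) < e' k then VY else VX)"
      using nth_gw[OF k'] by (simp add: e'_def)
    consider "k < g" | "k = g" | "k = Suc g" | "k > Suc g" by linarith
    then show "gw (Suc n) (ins n g \<sigma>) ! k = (take g (gw n \<sigma>) @ [VX, VY] @ drop (Suc g) (gw n \<sigma>)) ! k"
    proof cases
      case 1
      then show ?thesis using g L e1[of k] e1[of "Suc k"] nth_gw[of k n \<sigma>]
        by (simp add: nth_append e_def)
    next
      case 2
      then show ?thesis using g L e1[of k] e2 ele[of k] by (simp add: nth_append)
    next
      case 3
      then show ?thesis using g L e3[of "Suc k"] e2 ele[of "Suc g"] by (simp add: nth_append)
    next
      case 4
      then have "k - Suc (Suc g) + Suc g = k - 1" "k - 1 \<le> n" using k' by auto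
      then show ?thesis using g L e3[of k] e3[of "Suc k"] 4 nth_gw[of "k - 1" n \<sigma>]
        by (simp add: nth_append e_def)
    qed
  qed
qed



definition wd :: "nat \<Rightarrow> (nat \<Rightarrow> nat) \<Rightarrow> mvar list" where "wd n \<sigma> = rev (gw n \<sigma>)"

lemma length_wd[simp]: "length (wd n \<sigma>) = Suc n" by (simp add: wd_def)

lemma wd_ins:
  assumes s: "\<sigma> permutes {1..n}" and g: "g \<le> n"
  shows "wd (Suc n) (ins n g \<sigma>) = take (n - g) (wd n \<sigma>) @ [VY, VX] @ drop (Suc (n - g)) (wd n \<sigma>)"
  using g by (simp add: wd_def gw_ins[OF s g] take_rev drop_rev Suc_diff_le)

lemma main_inv:
  "(D_inv ^^ n) (gword [(VX, 0, False)]) =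
     (\<Sum>\<sigma>\<in>Pn n. Poly_Mapping.single (Ew 0 (wd n \<sigma>)) (qq ^ inv n \<sigma>) :: 'k::comm_ring_1 E)"
proof (induction n)
  case 0
  have P0: "Pn 0 = {id}" by (simp add: Pn_def)
  have e0: "{(i, j). 1 \<le> i \<and> i < j \<and> j \<le> (0::nat) \<and> id i > id j} = ({}::(nat \<times> nat) set)" by auto
  have i0: "inv 0 id = 0" unfolding inv_def e0 by simp
  have w0: "wd 0 id = [VX]" by (simp add: wd_def gw_def ext_perm_def)
  show ?case using gword_Ew[of 0 "[VX]"] by (simp add: P0 i0[unfolded id_def] w0[unfolded id_def])
next
  case (Suc n)
  define G where "G = (\<lambda>\<tau>. Poly_Mapping.single (Ew 0 (wd (Suc n) \<tau>)) (qq ^ inv (Suc n) \<tau>) :: 'k E)"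
  have step: "D_inv (Poly_Mapping.single (Ew 0 (wd n \<sigma>)) (qq ^ inv n \<sigma>)) = (\<Sum>g\<in>{0..n}. G (ins n g \<sigma>))"
    if s: "\<sigma> \<in> Pn n" for \<sigma>
  proof -
    have s': "\<sigma> permutes {1..n}" using s by (simp add: Pn_def)
    define F where "F = (\<lambda>j. Poly_Mapping.single (Ew 0 (take j (wd n \<sigma>) @ [VY, VX] @ drop (Suc j) (wd n \<sigma>)))
        (qq ^ inv n \<sigma> * qq ^ j) :: 'k E)"
    have "D_inv (Poly_Mapping.single (Ew 0 (wd n \<sigma>)) (qq ^ inv n \<sigma>)) = (\<Sum>j<Suc n. F j)"
      by (simp add: D_inv_single F_def)
    also have "\<dots> = (\<Sum>j\<in>{0..n}. F j)"
      by (rule sum.cong) auto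
    also have "\<dots> = (\<Sum>g\<in>{0..n}. F (n - g))"
      using sum.atLeastAtMost_rev[of F 0 n] by simp
    also have "\<dots> = (\<Sum>g\<in>{0..n}. G (ins n g \<sigma>))"
      by (rule sum.cong) (simp_all add: F_def G_def wd_ins[OF s'] inv_ins[OF s'] flip: power_add)
    finally show ?thesis .
  qed
  have "(D_inv ^^ Suc n) (gword [(VX, 0, False)]) =
     D_inv (\<Sum>\<sigma>\<in>Pn n. Poly_Mapping.single (Ew 0 (wd n \<sigma>)) (qq ^ inv n \<sigma>) :: 'k E)"
    using Suc by simp
  also have "\<dots> = (\<Sum>\<sigma>\<in>Pn n. D_inv (Poly_Mapping.single (Ew 0 (wd n \<sigma>)) (qq ^ inv n \<sigma>)))"
    unfolding D_inv_def qderiv_def by (rule linE_sum)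
  also have "\<dots> = (\<Sum>\<sigma>\<in>Pn n. \<Sum>g\<in>{0..n}. G (ins n g \<sigma>))"
    by (rule sum.cong) (simp_all add: step)
  also have "\<dots> = (\<Sum>(\<sigma>, g)\<in>Pn n \<times> {0..n}. G (ins n g \<sigma>))"
    by (rule sum.cartesian_product)
  also have "\<dots> = (\<Sum>\<tau>\<in>Pn (Suc n). G \<tau>)"
    using sum.reindex_bij_betw[OF ins_bij[of n], of G] by (simp add: case_prod_beta')
  finally show ?case by (simp add: G_def)
qed

lemma prod_Ew: "prod_list (map phi_letter (Ew k w)) =
    (prod_list (map (\<lambda>c. if c = VX then varx else vary) w) :: 'k::comm_ring_1 poly poly poly)"
  by (induction w arbitrary: k) auto

lemma ifif: "(if (if c then VY else VX) = VX then a else b) = (if c then b else a)"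
  by simp

lemma prod_wd: "prod_list (map phi_letter (Ew 0 (wd n \<sigma>))) =
    (varx ^ asc n \<sigma> * vary ^ des n \<sigma> :: 'k::comm_ring_1 poly poly poly)"
proof -
  define P where "P = (\<lambda>k. ext_perm n \<sigma> k > ext_perm n \<sigma> (Suc k))"
  have "prod_list (map phi_letter (Ew 0 (wd n \<sigma>))) =
      (prod_list (map (\<lambda>k. if P k then vary else varx) [0..<Suc n]) :: 'k poly poly poly)"
    by (simp add: prod_Ew wd_def gw_def rev_map[symmetric] P_def o_def ifif del: upt_Suc rev_map)
  also have "\<dots> = (\<Prod>k\<in>{0..n}. if P k then vary else varx)"
  proof -
    have "prod_list (map (\<lambda>k. if P k then vary else varx) [0..<Suc n]) =
        (\<Prod>k\<in>set [0..<Suc n]. if P k then vary else (varx :: 'k poly poly poly))"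
      by (rule prod.distinct_set_conv_list[symmetric]) simp
    then show ?thesis by (simp only: set_upt atLeastLessThanSuc_atLeastAtMost)
  qed
  also have "\<dots> = vary ^ card ({0..n} \<inter> {k. P k}) * varx ^ card ({0..n} \<inter> - {k. P k})"
    by (simp add: prod.If_cases)
  also have "\<dots> = varx ^ asc n \<sigma> * vary ^ des n \<sigma>"
    by (simp add: asc_def des_def P_def Int_def Collect_conj_eq[symmetric] mult.commute)
  finally show ?thesis .
qed

theorem theorem5p4:
  fixes n :: nat
  assumes "n \<ge> 1"
  shows "phi ((D_inv ^^ n) (gword [(VX, 0, False)]) :: ('k::{comm_ring_1, ring_char_0}) E) = A_inv n"
proof -
  have "phi ((D_inv ^^ n) (gword [(VX, 0, False)]) :: 'k E) =
      (\<Sum>\<sigma>\<in>Pn n. phi (Poly_Mapping.single (Ew 0 (wd n \<sigma>)) (qq ^ inv n \<sigma>) :: 'k E))"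
    by (simp add: main_inv phi_sum)
  also have "\<dots> = A_inv n"
    by (simp add: A_inv_def Pn_def phi_single prod_wd mult.assoc)
  finally show ?thesis .
qed

end
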